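(* Let $G$ be a connected graph of girth at least $6$ that has exactly two vertices $x,y$ of type $2$ and no vertex of type $k$ for any $k\geq 3$. Then $G$ is almost well-covered if and only if $x$ and $y$ are adjacent and one of the following two conditions holds: (1) $V(G_0)=\emptyset$; (2) $G_0\cong K_2$, neither $x$ nor $y$ has a neighbor in $G_0$, and the two vertices of $G_0$ both have degree $2$ in $G$ and are contained in an induced $6$-cycle of $G$ that contains $x$ and $y$.
   Context: All graphs are finite and simple. The girth of a graph is the length of a shortest cycle (infinite for acyclic graphs). For a graph $G$, $\alpha(G)$ is the maximum size of an independent set and $i(G)$ is the minimum size of an inclusion-maximal independent set. $G$ is almost well-covered if $\alpha(G)-i(G)=1$. Types of vertices: let $U$ be the set of vertices of $G$ whose connected component in $G$ is a complete graph. In $G-U$, vertices of degree $1$ are called leaves and the other vertices are called internal vertices. An internal vertex adjacent to exactly $k$ leaves is said to be of type $k$; in addition, every vertex of $U$ is of type $0$ (leaves of $G-U$ have no type). $G_i$ denotes the subgraph of $G$ induced by all vertices of type $i$. *)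

theory Defs
  imports Main "HOL-Library.Extended_Nat"
begin

definition graph :: "'a set \<Rightarrow> ('a \<Rightarrow> 'a \<Rightarrow> bool) \<Rightarrow> bool" where
  "graph V E \<longleftrightarrow> finite V \<and> (\<forall>u v. E u v \<longrightarrow> u \<in> V \<and> v \<in> V)
     \<and> (\<forall>u v. E u v \<longrightarrow> E v u) \<and> (\<forall>v. \<not> E v v)"

definition connected_graph :: "'a set \<Rightarrow> ('a \<Rightarrow> 'a \<Rightarrow> bool) \<Rightarrow> bool" where
  "connected_graph V E \<longleftrightarrow> V \<noteq> {} \<and> (\<forall>u\<in>V. \<forall>v\<in>V. E\<^sup>*\<^sup>* u v)"

definition degree :: "'a set \<Rightarrow> ('a \<Rightarrow> 'a \<Rightarrow> bool) \<Rightarrow> 'a \<Rightarrow> nat" where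
  "degree V E v = card {u \<in> V. E v u}"

definition induced :: "'a set \<Rightarrow> ('a \<Rightarrow> 'a \<Rightarrow> bool) \<Rightarrow> ('a \<Rightarrow> 'a \<Rightarrow> bool)" where
  "induced S E = (\<lambda>u v. u \<in> S \<and> v \<in> S \<and> E u v)"

definition is_cycle :: "'a set \<Rightarrow> ('a \<Rightarrow> 'a \<Rightarrow> bool) \<Rightarrow> 'a list \<Rightarrow> bool" where
  "is_cycle V E cs \<longleftrightarrow> length cs \<ge> 3 \<and> distinct cs \<and> set cs \<subseteq> V
     \<and> (\<forall>i < length cs. E (cs ! i) (cs ! ((i + 1) mod length cs)))"

definition is_induced_cycle :: "'a set \<Rightarrow> ('a \<Rightarrow> 'a \<Rightarrow> bool) \<Rightarrow> 'a list \<Rightarrow> bool" where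
  "is_induced_cycle V E cs \<longleftrightarrow> is_cycle V E cs \<and>
     (\<forall>i < length cs. \<forall>j < length cs. E (cs ! i) (cs ! j) \<longrightarrow>
        j = (i + 1) mod length cs \<or> i = (j + 1) mod length cs)"

text \<open>Girth: length of a shortest cycle, infinite if acyclic.\<close>
definition girth :: "'a set \<Rightarrow> ('a \<Rightarrow> 'a \<Rightarrow> bool) \<Rightarrow> enat" where
  "girth V E = Inf {enat (length cs) | cs. is_cycle V E cs}"

definition independent :: "'a set \<Rightarrow> ('a \<Rightarrow> 'a \<Rightarrow> bool) \<Rightarrow> 'a set \<Rightarrow> bool" where
  "independent V E S \<longleftrightarrow> S \<subseteq> V \<and> (\<forall>u\<in>S. \<forall>v\<in>S. \<not> E u v)"

definition maximal_independent :: "'a set \<Rightarrow> ('a \<Rightarrow> 'a \<Rightarrow> bool) \<Rightarrow> 'a set \<Rightarrow> bool" where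
  "maximal_independent V E S \<longleftrightarrow> independent V E S \<and>
     (\<forall>T. independent V E T \<and> S \<subseteq> T \<longrightarrow> T = S)"

definition alpha :: "'a set \<Rightarrow> ('a \<Rightarrow> 'a \<Rightarrow> bool) \<Rightarrow> nat" where
  "alpha V E = Max {card S | S. independent V E S}"

definition indep_dom :: "'a set \<Rightarrow> ('a \<Rightarrow> 'a \<Rightarrow> bool) \<Rightarrow> nat" where
  "indep_dom V E = Min {card S | S. maximal_independent V E S}"

definition almost_well_covered :: "'a set \<Rightarrow> ('a \<Rightarrow> 'a \<Rightarrow> bool) \<Rightarrow> bool" where
  "almost_well_covered V E \<longleftrightarrow> int (alpha V E) - int (indep_dom V E) = 1"

text \<open>U: vertices whose connected component is complete.\<close>
definition complete_comp_vertices :: "'a set \<Rightarrow> ('a \<Rightarrow> 'a \<Rightarrow> bool) \<Rightarrow> 'a set" where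
  "complete_comp_vertices V E = {v \<in> V. \<forall>a b. E\<^sup>*\<^sup>* v a \<and> E\<^sup>*\<^sup>* v b \<and> a \<noteq> b \<longrightarrow> E a b}"

definition leaves :: "'a set \<Rightarrow> ('a \<Rightarrow> 'a \<Rightarrow> bool) \<Rightarrow> 'a set" where
  "leaves V E = (let W = V - complete_comp_vertices V E in
     {v \<in> W. degree W (induced W E) v = 1})"

definition internal_vertices :: "'a set \<Rightarrow> ('a \<Rightarrow> 'a \<Rightarrow> bool) \<Rightarrow> 'a set" where
  "internal_vertices V E = (V - complete_comp_vertices V E) - leaves V E"

definition has_type :: "'a set \<Rightarrow> ('a \<Rightarrow> 'a \<Rightarrow> bool) \<Rightarrow> 'a \<Rightarrow> nat \<Rightarrow> bool" where
  "has_type V E v k \<longleftrightarrow>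
     (v \<in> complete_comp_vertices V E \<and> k = 0) \<or>
     (v \<in> internal_vertices V E \<and> card {u \<in> leaves V E. E v u} = k)"

definition type_vertices :: "'a set \<Rightarrow> ('a \<Rightarrow> 'a \<Rightarrow> bool) \<Rightarrow> nat \<Rightarrow> 'a set" where
  "type_vertices V E k = {v \<in> V. has_type V E v k}"

end

theory Submission
  imports Defs
begin

lemma all3: "(\<forall>i<Suc (Suc (Suc 0)). P i) \<longleftrightarrow> P 0 \<and> P 1 \<and> P 2"
proof -
  have "(i::nat) < Suc (Suc (Suc 0)) \<longleftrightarrow> i = 0 \<or> i = 1 \<or> i = 2" for i by arith
  thus ?thesis by auto
qed
lemma all4: "(\<forall>i<Suc (Suc (Suc (Suc 0))). P i) \<longleftrightarrow> P 0 \<and> P 1 \<and> P 2 \<and> P 3"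
proof -
  have "(i::nat) < Suc (Suc (Suc (Suc 0))) \<longleftrightarrow> i = 0 \<or> i = 1 \<or> i = 2 \<or> i = 3" for i by arith
  thus ?thesis by auto
qed
lemma all5: "(\<forall>i<Suc (Suc (Suc (Suc (Suc 0)))). P i) \<longleftrightarrow> P 0 \<and> P 1 \<and> P 2 \<and> P 3 \<and> P 4"
proof -
  have "(i::nat) < Suc (Suc (Suc (Suc (Suc 0)))) \<longleftrightarrow> i = 0 \<or> i = 1 \<or> i = 2 \<or> i = 3 \<or> i = 4" for i by arith
  thus ?thesis by auto
qed
lemma all6: "(\<forall>i<Suc (Suc (Suc (Suc (Suc (Suc 0))))). P i) \<longleftrightarrow> P 0 \<and> P 1 \<and> P 2 \<and> P 3 \<and> P 4 \<and> P 5"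
proof -
  have "(i::nat) < Suc (Suc (Suc (Suc (Suc (Suc 0))))) \<longleftrightarrow> i = 0 \<or> i = 1 \<or> i = 2 \<or> i = 3 \<or> i = 4 \<or> i = 5" for i by arith
  thus ?thesis by auto
qed

lemma cyc3: "is_cycle V E [a,b,c]" if "E a b" "E b c" "E c a" "distinct [a,b,c]" "{a,b,c} \<subseteq> V"
  using that unfolding is_cycle_def by (simp add: all3)
lemma cyc4: "is_cycle V E [a,b,c,d]" if "E a b" "E b c" "E c d" "E d a" "distinct [a,b,c,d]" "{a,b,c,d} \<subseteq> V"
  using that unfolding is_cycle_def by (simp add: all4)
lemma cyc5: "is_cycle V E [a,b,c,d,e]" if "E a b" "E b c" "E c d" "E d e" "E e a" "distinct [a,b,c,d,e]" "{a,b,c,d,e} \<subseteq> V"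
  using that unfolding is_cycle_def by (simp add: all5)
lemma cyc6: "is_induced_cycle V E [a,b,c,d,e,f]" if "E a b" "E b c" "E c d" "E d e" "E e f" "E f a" "distinct [a,b,c,d,e,f]" "{a,b,c,d,e,f} \<subseteq> V"
 "\<not> E a c" "\<not> E a d" "\<not> E a e" "\<not> E b d" "\<not> E b e" "\<not> E b f" "\<not> E c e" "\<not> E c f" "\<not> E d f" "\<not> E c a" "\<not> E d a" "\<not> E e a" "\<not> E d b" "\<not> E e b" "\<not> E f b" "\<not> E e c" "\<not> E f c" "\<not> E f d" "\<And>v. \<not> E v v"
  using that unfolding is_induced_cycle_def is_cycle_def by (simp add: all6)

lemma int_if_eq: "(a::nat) + (if P then 1 else 0) + (if Q then 1 else 0) = b + c \<Longrightarrow> int a = int b + int c - (if P then 1 else 0) - (if Q then 1 else 0)"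
  by (cases P; cases Q) auto

locale G6 =
  fixes V :: "'a set" and E :: "'a \<Rightarrow> 'a \<Rightarrow> bool" and x y :: 'a
  assumes gr: "graph V E" and conn: "connected_graph V E" and gir: "girth V E \<ge> 6"
    and xy: "x \<noteq> y" and t2: "type_vertices V E 2 = {x,y}"
    and tle: "\<forall>v k. has_type V E v k \<longrightarrow> k \<le> 2"
begin

lemma finV: "finite V" using gr unfolding graph_def by auto
lemma inV: "E u v \<Longrightarrow> u \<in> V \<and> v \<in> V" using gr unfolding graph_def by auto
lemma sym: "E u v \<Longrightarrow> E v u" using gr unfolding graph_def by auto
lemma irr: "\<not> E v v" using gr unfolding graph_def by auto
lemma reach: "u \<in> V \<Longrightarrow> v \<in> V \<Longrightarrow> E\<^sup>*\<^sup>* u v" using conn unfolding connected_graph_def by auto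

lemma cyc_len: assumes "is_cycle V E cs" shows "6 \<le> length cs"
proof -
  have "girth V E \<le> enat (length cs)" unfolding girth_def by (rule Inf_lower) (use assms in auto)
  with gir have "(6::enat) \<le> enat (length cs)" by (rule order_trans)
  thus ?thesis by (simp add: numeral_eq_enat)
qed

lemma no3: assumes "E a b" "E b c" "E c a" shows False
proof -
  have "is_cycle V E [a,b,c]" using assms inV irr by (intro cyc3) auto
  from cyc_len[OF this] show False by simp
qed

lemma no4: assumes "E a b" "E b c" "E c d" "E d a" "a \<noteq> c" "b \<noteq> d" shows False
proof -
  have "is_cycle V E [a,b,c,d]" using assms inV irr by (intro cyc4) auto
  from cyc_len[OF this] show False by simp
qed

lemma no5: assumes "E a b" "E b c" "E c d" "E d e" "E e a" "a \<noteq> c" "a \<noteq> d" "b \<noteq> d" "b \<noteq> e" "c \<noteq> e"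
  shows False
proof -
  have "is_cycle V E [a,b,c,d,e]" using assms inV irr by (intro cyc5) auto
  from cyc_len[OF this] show False by simp
qed

definition "LL = {v \<in> V. degree V E v = 1}"
definition "lv w = {l \<in> LL. E w l}"
definition "HH = type_vertices V E 0"

lemma U_empty: "complete_comp_vertices V E = {}"
proof -
  have "has_type V E x 2" using t2 unfolding type_vertices_def by auto
  hence xn: "x \<notin> complete_comp_vertices V E" and xV: "x \<in> V"
    unfolding has_type_def internal_vertices_def by auto
  then obtain a b where ab: "E\<^sup>*\<^sup>* x a" "E\<^sup>*\<^sup>* x b" "a \<noteq> b" "\<not> E a b"
    unfolding complete_comp_vertices_def by auto
  { fix v assume "v \<in> complete_comp_vertices V E"
    hence v: "v \<in> V" "\<forall>a b. E\<^sup>*\<^sup>* v a \<and> E\<^sup>*\<^sup>* v b \<and> a \<noteq> b \<longrightarrow> E a b"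
      unfolding complete_comp_vertices_def by auto
    have "E\<^sup>*\<^sup>* v x" using reach v xV by auto
    hence "E\<^sup>*\<^sup>* v a" "E\<^sup>*\<^sup>* v b" using ab by auto
    hence False using v ab by auto }
  thus ?thesis by auto
qed

lemma induced_V: "induced V E = E"
  using inV unfolding induced_def by (auto intro!: ext)

lemma leaves_eq: "leaves V E = LL"
  unfolding leaves_def LL_def using U_empty induced_V by simp

lemma internal_eq: "internal_vertices V E = V - LL"
  unfolding internal_vertices_def using U_empty leaves_eq by simp

lemma has_type_iff: "has_type V E v k \<longleftrightarrow> v \<in> V - LL \<and> card (lv v) = k"
  unfolding has_type_def using U_empty internal_eq leaves_eq lv_def by simp

lemma LL_sub: "LL \<subseteq> V" unfolding LL_def by auto
lemma finLL: "finite LL" using LL_sub finV finite_subset by blast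
lemma fin_lv: "finite (lv v)" unfolding lv_def using finLL by auto

lemma HH_eq: "HH = {v \<in> V - LL. lv v = {}}"
  unfolding HH_def type_vertices_def using has_type_iff fin_lv by auto

lemma HH_sub: "HH \<subseteq> V - LL" using HH_eq by auto
lemma finHH: "finite HH" using HH_sub finV finite_subset by blast

lemma x_fact: "x \<in> V - LL" "card (lv x) = 2" "y \<in> V - LL" "card (lv y) = 2"
  using t2 has_type_iff unfolding type_vertices_def by blast+

lemma x_notH: "x \<notin> HH" "y \<notin> HH"
  using x_fact HH_eq by auto

lemma lv_le1: assumes "v \<in> V - LL" "v \<noteq> x" "v \<noteq> y" shows "card (lv v) \<le> 1"
proof -
  have "has_type V E v (card (lv v))" using assms has_type_iff by auto
  hence "card (lv v) \<le> 2" using tle by auto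
  moreover have "card (lv v) \<noteq> 2"
  proof
    assume "card (lv v) = 2"
    hence "v \<in> type_vertices V E 2" using assms has_type_iff unfolding type_vertices_def by auto
    thus False using t2 assms by auto
  qed
  ultimately show ?thesis by auto
qed

lemma leaf_nb: assumes "l \<in> LL" obtains p where "{u \<in> V. E l u} = {p}"
proof -
  have "card {u \<in> V. E l u} = 1" using assms unfolding LL_def degree_def by simp
  then obtain p where "{u \<in> V. E l u} = {p}" by (rule card_1_singletonE)
  thus ?thesis by (rule that)
qed

lemma leaf_unique: assumes "l \<in> LL" "E l p" "E l q" shows "p = q"
proof -
  obtain r where r: "{u \<in> V. E l u} = {r}" using leaf_nb assms(1) by blast
  have "p \<in> {u \<in> V. E l u}" "q \<in> {u \<in> V. E l u}" using assms inV by auto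
  thus ?thesis unfolding r by simp
qed

lemma leaf_par: assumes l: "l \<in> LL" and p: "E l p" shows "p \<in> V - LL" "p \<notin> HH" "l \<in> lv p"
proof -
  show "l \<in> lv p" unfolding lv_def using l p sym by auto
  show "p \<notin> HH" using \<open>l \<in> lv p\<close> HH_eq by auto
  have pV: "p \<in> V" using inV p by auto
  have "p \<notin> LL"
  proof
    assume pL: "p \<in> LL"
    have c: "E l t \<Longrightarrow> t = p" for t using leaf_unique l p by auto
    have d: "E p t \<Longrightarrow> t = l" for t using leaf_unique pL sym p by auto
    have "E\<^sup>*\<^sup>* l t \<Longrightarrow> t \<in> {l, p}" for t
      by (induction rule: rtranclp_induct) (use c d in auto)
    moreover have "E\<^sup>*\<^sup>* l x" using reach l LL_sub x_fact by auto
    ultimately have "x \<in> LL" using l pL by auto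
    thus False using x_fact by auto
  qed
  thus "p \<in> V - LL" using pV by auto
qed

lemma H_nb: "v \<in> HH \<Longrightarrow> E v t \<Longrightarrow> t \<notin> LL"
  using HH_eq unfolding lv_def by auto

lemma deg2: assumes "v \<in> V - LL" obtains a b where "a \<noteq> b" "E v a" "E v b"
proof -
  let ?N = "{u \<in> V. E v u}"
  have fin: "finite ?N" using finV by auto
  have n1: "card ?N \<noteq> 1" using assms unfolding LL_def degree_def by auto
  have n0: "card ?N \<noteq> 0"
  proof
    assume "card ?N = 0"
    hence e: "\<not> E v u" for u using fin inV by auto
    have "E\<^sup>*\<^sup>* v t \<Longrightarrow> t = v" for t
      by (induction rule: rtranclp_induct) (use e in auto)
    hence "x = v" "y = v" using reach assms x_fact by auto
    thus False using xy by auto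
  qed
  obtain a where a: "a \<in> ?N" using n0 by (metis all_not_in_conv card.empty)
  have c2: "card ?N \<ge> 2" using n0 n1 by linarith
  have "card (?N - {a}) = card ?N - 1" using a by (rule card_Diff_singleton)
  hence "card (?N - {a}) \<noteq> 0" using c2 by linarith
  then obtain b where "b \<in> ?N - {a}" by (metis all_not_in_conv card.empty)
  thus ?thesis using a that by auto
qed

lemma other_nb: assumes "v \<in> V - LL" obtains z where "E v z" "z \<noteq> t"
  using deg2[OF assms] by metis

lemma indepD: "independent V E S \<Longrightarrow> a \<in> S \<Longrightarrow> b \<in> S \<Longrightarrow> \<not> E a b"
  unfolding independent_def by auto

lemma indep_ext: assumes "independent V E D" obtains S where "maximal_independent V E S" "D \<subseteq> S"
proof -
  let ?C = "{T. independent V E T \<and> D \<subseteq> T}"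
  have "?C \<subseteq> Pow V" unfolding independent_def by auto
  hence finC: "finite ?C" using finV by (meson finite_Pow_iff finite_subset)
  have "D \<in> ?C" using assms by auto
  hence ne: "card ` ?C \<noteq> {}" by auto
  have "Max (card ` ?C) \<in> card ` ?C" using Max_in[OF _ ne] finC by auto
  then obtain T where T: "T \<in> ?C" "card T = Max (card ` ?C)" by auto
  have "maximal_independent V E T"
    unfolding maximal_independent_def
  proof (intro conjI allI impI)
    show "independent V E T" using T by auto
    fix T' assume a: "independent V E T' \<and> T \<subseteq> T'"
    hence "T' \<in> ?C" using T by auto
    hence "card T' \<le> card T" using T finC by auto
    moreover have "finite T'" using a finV unfolding independent_def by (auto intro: finite_subset)
    ultimately show "T' = T" using a card_seteq by blast
  qed
  thus ?thesis using that T by auto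
qed

lemma max_indep: "maximal_independent V E S \<Longrightarrow> independent V E S"
  unfolding maximal_independent_def by auto

lemma max_sub: "maximal_independent V E S \<Longrightarrow> S \<subseteq> V"
  unfolding maximal_independent_def independent_def by auto

lemma max_dom: assumes S: "maximal_independent V E S" and v: "v \<in> V" "v \<notin> S"
  shows "\<exists>s\<in>S. E v s"
proof (rule ccontr)
  assume "\<not> ?thesis"
  hence "independent V E (insert v S)" using max_indep[OF S] v sym irr
    unfolding independent_def by auto
  hence "insert v S = S" using S unfolding maximal_independent_def by blast
  thus False using v by auto
qed


definition "aH = Max {card M | M. M \<subseteq> HH \<and> independent V E M}"

lemma finCardH: "finite {card M | M. M \<subseteq> HH \<and> independent V E M}"
proof -
  have "{card M | M. M \<subseteq> HH \<and> independent V E M} \<subseteq> card ` Pow HH" by auto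
  thus ?thesis using finHH by (meson finite_Pow_iff finite_imageI finite_subset)
qed

lemma aH_ge: "M \<subseteq> HH \<Longrightarrow> independent V E M \<Longrightarrow> card M \<le> aH"
  unfolding aH_def using finCardH by (intro Max_ge) auto

lemma aH_ex: obtains M where "M \<subseteq> HH" "independent V E M" "card M = aH"
proof -
  have "independent V E {}" unfolding independent_def by auto
  hence ne: "{card M | M. M \<subseteq> HH \<and> independent V E M} \<noteq> {}" by auto
  have "aH \<in> {card M | M. M \<subseteq> HH \<and> independent V E M}"
    unfolding aH_def using Max_in[OF finCardH ne] .
  thus ?thesis using that by auto
qed

definition "WW = V - LL - HH"

lemma lv_ne: "w \<in> WW \<Longrightarrow> lv w \<noteq> {}" unfolding WW_def using HH_eq by auto

lemma x_W: "x \<in> WW" "y \<in> WW" unfolding WW_def using x_fact x_notH by auto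

lemma card_lv: assumes "w \<in> WW"
  shows "card (lv w) = 1 + (if w = x then 1 else 0) + (if w = y then 1 else 0)"
proof (cases "w = x \<or> w = y")
  case True thus ?thesis using x_fact xy by auto
next
  case False
  hence "card (lv w) \<le> 1" using assms lv_le1 unfolding WW_def by auto
  moreover have "card (lv w) \<noteq> 0" using lv_ne[OF assms] fin_lv by auto
  ultimately show ?thesis using False by auto
qed

lemma pick_lv: assumes "w \<in> WW" shows "(SOME l. l \<in> lv w) \<in> lv w"
  using lv_ne[OF assms] by (simp add: some_in_eq)

lemma indep_bound: assumes S: "independent V E S"
  shows "card S \<le> card LL + card (S \<inter> HH)"
proof -
  have SV: "S \<subseteq> V" using S unfolding independent_def by auto
  have finS: "finite S" using SV finV finite_subset by blast
  have eq: "S = (S \<inter> LL) \<union> (S \<inter> WW) \<union> (S \<inter> HH)" using SV unfolding WW_def by auto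
  have c1: "card S \<le> card ((S \<inter> LL) \<union> (S \<inter> WW)) + card (S \<inter> HH)"
    by (subst eq) (rule card_Un_le)
  have c2: "card ((S \<inter> LL) \<union> (S \<inter> WW)) \<le> card (S \<inter> LL) + card (S \<inter> WW)"
    by (rule card_Un_le)
  from c1 c2 have "card S \<le> card (S \<inter> LL) + card (S \<inter> WW) + card (S \<inter> HH)" by linarith
  moreover have "card (S \<inter> WW) \<le> card (LL - S)"
  proof (rule card_inj_on_le)
    let ?f = "\<lambda>w. SOME l. l \<in> lv w"
    show "inj_on ?f (S \<inter> WW)"
    proof (rule inj_onI)
      fix a b assume ab: "a \<in> S \<inter> WW" "b \<in> S \<inter> WW" "?f a = ?f b"
      have fa: "?f a \<in> lv a" using pick_lv[of a] ab(1) by blast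
      have fb: "?f b \<in> lv b" using pick_lv[of b] ab(2) by blast
      from fa have "?f a \<in> LL" "E (?f a) a" using sym unfolding lv_def by auto
      moreover from fb have "E (?f b) b" using sym unfolding lv_def by auto
      ultimately have "?f a \<in> LL" "E (?f a) a" "E (?f a) b" using ab(3) by auto
      thus "a = b" using leaf_unique by blast
    qed
    show "?f ` (S \<inter> WW) \<subseteq> LL - S"
    proof
      fix l assume "l \<in> ?f ` (S \<inter> WW)"
      then obtain w where w: "w \<in> S \<inter> WW" "l = ?f w" by auto
      hence "l \<in> lv w" using pick_lv by auto
      hence "l \<in> LL" "E w l" unfolding lv_def by auto
      moreover have "l \<notin> S" using indepD[OF S] w \<open>E w l\<close> by auto
      ultimately show "l \<in> LL - S" by auto
    qed
    show "finite (LL - S)" using finLL by auto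
  qed
  moreover have "card (S \<inter> LL) + card (LL - S) = card LL"
  proof -
    have "card LL = card (LL \<inter> S) + card (LL - S)" using finLL by (rule card_Int_Diff)
    thus ?thesis by (simp add: Int_commute)
  qed
  ultimately show ?thesis by linarith
qed

lemma LL_H_indep: assumes M: "M \<subseteq> HH" "independent V E M" shows "independent V E (LL \<union> M)"
  unfolding independent_def
proof (intro conjI ballI)
  show "LL \<union> M \<subseteq> V" using LL_sub M HH_sub unfolding independent_def by auto
  fix a b assume a: "a \<in> LL \<union> M" and b: "b \<in> LL \<union> M"
  show "\<not> E a b"
  proof
    assume ab: "E a b"
    show False
    proof (cases "a \<in> LL")
      case True
      hence "b \<in> V - LL" "b \<notin> HH" using leaf_par ab by auto
      thus False using b M by auto
    next
      case False
      hence aM: "a \<in> M" using a by auto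
      hence "a \<in> HH" using M by auto
      hence "b \<notin> LL" using H_nb ab by auto
      hence "b \<in> M" using b by auto
      thus False using indepD[OF M(2) aM] ab by auto
    qed
  qed
qed

lemma finCard: "finite {card S |S. independent V E S}"
proof -
  have "{card S |S. independent V E S} \<subseteq> card ` Pow V" unfolding independent_def by auto
  thus ?thesis using finV by (meson finite_Pow_iff finite_imageI finite_subset)
qed

lemma alpha_eq: "alpha V E = card LL + aH"
proof -
  have ub: "n \<le> card LL + aH" if nin: "n \<in> {card S |S. independent V E S}" for n
  proof -
    obtain S where S: "independent V E S" "n = card S" using nin by auto
    have "S \<inter> HH \<subseteq> HH" "independent V E (S \<inter> HH)" using S unfolding independent_def by auto
    hence "card (S \<inter> HH) \<le> aH" by (rule aH_ge)
    thus "n \<le> card LL + aH" using indep_bound[OF S(1)] S(2) by linarith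
  qed
  obtain M where M: "M \<subseteq> HH" "independent V E M" "card M = aH" by (rule aH_ex)
  have "LL \<inter> M = {}" using M HH_sub by auto
  moreover have "finite M" using M finHH finite_subset by blast
  ultimately have c: "card (LL \<union> M) = card LL + aH" using finLL M by (simp add: card_Un_disjoint)
  have "independent V E (LL \<union> M)" using LL_H_indep[OF M(1,2)] .
  hence mem: "card LL + aH \<in> {card S |S. independent V E S}" unfolding c[symmetric] by blast
  show ?thesis unfolding alpha_def using finCard mem ub by (intro Max_eqI) auto
qed


lemma max_card: assumes S: "maximal_independent V E S"
  shows "int (card S) = int (card LL) + int (card (S \<inter> HH)) - (if x \<in> S then 1 else 0) - (if y \<in> S then 1 else 0)"
proof -
  have Si: "independent V E S" using max_indep[OF S] .
  have SV: "S \<subseteq> V" using max_sub[OF S] .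
  have finS: "finite S" using SV finV finite_subset by blast
  have eqS: "S = (S \<inter> LL) \<union> (S \<inter> WW) \<union> (S \<inter> HH)" using SV unfolding WW_def by auto
  have d1: "(S \<inter> LL) \<inter> (S \<inter> WW) = {}" unfolding WW_def by auto
  have d2: "((S \<inter> LL) \<union> (S \<inter> WW)) \<inter> (S \<inter> HH) = {}" using HH_sub unfolding WW_def by auto
  have "card S = card ((S \<inter> LL) \<union> (S \<inter> WW) \<union> (S \<inter> HH))" using eqS by (rule arg_cong)
  also have "\<dots> = card ((S \<inter> LL) \<union> (S \<inter> WW)) + card (S \<inter> HH)"
    by (rule card_Un_disjoint) (use finS d2 in auto)
  also have "card ((S \<inter> LL) \<union> (S \<inter> WW)) = card (S \<inter> LL) + card (S \<inter> WW)"
    by (rule card_Un_disjoint) (use finS d1 in auto)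
  finally have cS: "card S = card (S \<inter> LL) + card (S \<inter> WW) + card (S \<inter> HH)" .
  have LLdiff: "LL - S = (\<Union>w\<in>S \<inter> WW. lv w)"
  proof
    show "LL - S \<subseteq> (\<Union>w\<in>S \<inter> WW. lv w)"
    proof
      fix l assume l: "l \<in> LL - S"
      hence "l \<in> V" using LL_sub by auto
      then obtain s where s: "s \<in> S" "E l s" using max_dom[OF S] l by blast
      have "s \<in> V - LL" "s \<notin> HH" "l \<in> lv s" using leaf_par[of l s] l s by auto
      thus "l \<in> (\<Union>w\<in>S \<inter> WW. lv w)" using s unfolding WW_def by auto
    qed
    show "(\<Union>w\<in>S \<inter> WW. lv w) \<subseteq> LL - S"
    proof
      fix l assume "l \<in> (\<Union>w\<in>S \<inter> WW. lv w)"
      then obtain w where w: "w \<in> S" "l \<in> lv w" by auto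
      hence "l \<in> LL" "E w l" unfolding lv_def by auto
      moreover have "l \<notin> S" using indepD[OF Si w(1)] \<open>E w l\<close> by auto
      ultimately show "l \<in> LL - S" by auto
    qed
  qed
  have cU: "card (\<Union>w\<in>S \<inter> WW. lv w) = (\<Sum>w\<in>S \<inter> WW. card (lv w))"
  proof (rule card_UN_disjoint)
    show "finite (S \<inter> WW)" using finS by auto
    show "\<forall>i\<in>S \<inter> WW. finite (lv i)" using fin_lv by auto
    show "\<forall>i\<in>S \<inter> WW. \<forall>j\<in>S \<inter> WW. i \<noteq> j \<longrightarrow> lv i \<inter> lv j = {}"
    proof (intro ballI impI)
      fix i j :: 'a assume "i \<noteq> j"
      show "lv i \<inter> lv j = {}"
      proof (rule ccontr)
        assume "lv i \<inter> lv j \<noteq> {}"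
        then obtain l where "l \<in> LL" "E i l" "E j l" unfolding lv_def by auto
        hence "i = j" using leaf_unique sym by blast
        thus False using \<open>i \<noteq> j\<close> by auto
      qed
    qed
  qed
  have "(\<Sum>w\<in>S \<inter> WW. card (lv w)) = (\<Sum>w\<in>S \<inter> WW. 1 + (if w = x then 1 else 0) + (if w = y then 1 else 0))"
    by (rule sum.cong) (auto simp: card_lv)
  also have "\<dots> = card (S \<inter> WW) + (\<Sum>w\<in>S \<inter> WW. (if w = x then 1 else 0)) + (\<Sum>w\<in>S \<inter> WW. (if w = y then 1 else 0))"
    by (simp only: sum.distrib) simp
  also have "\<dots> = card (S \<inter> WW) + (if x \<in> S then 1 else 0) + (if y \<in> S then 1 else 0)"
    using finS x_W by (simp add: sum.delta')
  finally have sm: "(\<Sum>w\<in>S \<inter> WW. card (lv w)) = card (S \<inter> WW) + (if x \<in> S then 1 else 0) + (if y \<in> S then 1 else 0)" .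
  have cL: "card LL = card (S \<inter> LL) + card (LL - S)"
  proof -
    have "card LL = card (LL \<inter> S) + card (LL - S)" using finLL by (rule card_Int_Diff)
    thus ?thesis by (simp add: Int_commute)
  qed
  have neq: "card S + (if x \<in> S then 1 else 0) + (if y \<in> S then 1 else 0) = card LL + card (S \<inter> HH)"
  proof -
    have "card (LL - S) = card (S \<inter> WW) + (if x \<in> S then 1 else 0) + (if y \<in> S then 1 else 0)"
      using LLdiff cU sm by simp
    thus ?thesis using cS cL by linarith
  qed
  thus ?thesis by (rule int_if_eq)
qed

lemma finMax: "finite {card S | S. maximal_independent V E S}"
proof -
  have "{card S |S. maximal_independent V E S} \<subseteq> card ` Pow V" using max_sub by auto
  thus ?thesis using finV by (meson finite_Pow_iff finite_imageI finite_subset)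
qed

lemma i_le: "maximal_independent V E S \<Longrightarrow> indep_dom V E \<le> card S"
  unfolding indep_dom_def by (rule Min_le[OF finMax]) auto

lemma i_ex: obtains S where "maximal_independent V E S" "card S = indep_dom V E"
proof -
  have "independent V E {}" unfolding independent_def by auto
  then obtain S0 where "maximal_independent V E S0" by (rule indep_ext)
  hence ne: "{card S | S. maximal_independent V E S} \<noteq> {}" by auto
  have "indep_dom V E \<in> {card S | S. maximal_independent V E S}"
    unfolding indep_dom_def using Min_in[OF finMax ne] .
  thus ?thesis using that by auto
qed

lemma indep_sub: "independent V E S \<Longrightarrow> T \<subseteq> S \<Longrightarrow> independent V E T"
  unfolding independent_def by blast

lemma indep_insert: assumes "independent V E S" "v \<in> V" "\<forall>t\<in>S. \<not> E v t"
  shows "independent V E (insert v S)"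
  using assms sym irr unfolding independent_def by blast

lemma awc_key: assumes awc: "almost_well_covered V E" and S: "maximal_independent V E S"
  and M: "M \<subseteq> HH" "independent V E M"
  shows "int (card M) \<le> int (card (S \<inter> HH)) + 1 - (if x \<in> S then 1 else 0) - (if y \<in> S then 1 else 0)"
proof -
  have a: "int (alpha V E) - int (indep_dom V E) = 1" using awc unfolding almost_well_covered_def .
  have b: "int (indep_dom V E) \<le> int (card S)" using i_le[OF S] by simp
  have c: "int (card M) \<le> int aH" using aH_ge[OF M] by simp
  have d: "int (alpha V E) = int (card LL) + int aH" using alpha_eq by simp
  show ?thesis using a b c d max_card[OF S] by linarith
qed

lemma K1: assumes awc: "almost_well_covered V E" and S: "maximal_independent V E S"
  and xyS: "x \<in> S \<or> y \<in> S" and v: "v \<in> HH" "v \<notin> S" and nb: "\<forall>t\<in>S \<inter> HH. \<not> E v t"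
  shows False
proof -
  let ?M = "insert v (S \<inter> HH)"
  have Si: "independent V E (S \<inter> HH)" using indep_sub[OF max_indep[OF S]] by blast
  have "independent V E ?M" using indep_insert[OF Si] v nb HH_sub by blast
  moreover have "?M \<subseteq> HH" using v by auto
  ultimately have k: "int (card ?M) \<le> int (card (S \<inter> HH)) + 1 - (if x \<in> S then 1 else 0) - (if y \<in> S then 1 else 0)"
    by (rule awc_key[OF awc S, rotated])
  have "card ?M = card (S \<inter> HH) + 1" using v finHH by auto
  thus False using k xyS by (cases "x \<in> S"; cases "y \<in> S") auto
qed

lemma K2: assumes awc: "almost_well_covered V E" and S: "maximal_independent V E S"
  and v: "v1 \<in> HH" "v2 \<in> HH" "v1 \<noteq> v2" "\<not> E v1 v2" "v1 \<notin> S" "v2 \<notin> S"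
  and nb: "\<forall>t\<in>S \<inter> HH. \<not> E v1 t \<and> \<not> E v2 t"
  shows False
proof -
  let ?M = "insert v1 (insert v2 (S \<inter> HH))"
  have Si: "independent V E (S \<inter> HH)" using indep_sub[OF max_indep[OF S]] by blast
  have S2: "independent V E (insert v2 (S \<inter> HH))" using indep_insert[OF Si] v nb HH_sub by blast
  have "independent V E ?M" using indep_insert[OF S2] v nb HH_sub by blast
  moreover have "?M \<subseteq> HH" using v by auto
  ultimately have k: "int (card ?M) \<le> int (card (S \<inter> HH)) + 1 - (if x \<in> S then 1 else 0) - (if y \<in> S then 1 else 0)"
    by (rule awc_key[OF awc S, rotated])
  have "card ?M = card (S \<inter> HH) + 2" using v finHH by auto
  thus False using k by (cases "x \<in> S"; cases "y \<in> S") auto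
qed

lemma K3: assumes awc: "almost_well_covered V E" shows "E x y"
proof (rule ccontr)
  assume n: "\<not> E x y"
  have "independent V E {x, y}" using n sym irr x_fact unfolding independent_def by auto
  then obtain S where S: "maximal_independent V E S" "{x,y} \<subseteq> S" by (rule indep_ext)
  have "S \<inter> HH \<subseteq> HH" "independent V E (S \<inter> HH)" using indep_sub[OF max_indep[OF S(1)]] by auto
  from awc_key[OF awc S(1) this] S(2) show False by auto
qed


lemma G: assumes awc: "almost_well_covered V E" and v: "v \<in> HH"
    and w: "w \<in> V" "w \<notin> HH" "E v w"
    and s: "s = x \<or> s = y" and sw: "s = w \<or> \<not> E s w"
  shows "\<exists>u. u \<in> HH \<and> E v u \<and> (\<forall>z. E u z \<and> z \<noteq> v \<longrightarrow> z = s \<or> E z s)"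
proof (rule ccontr)
  assume na: "\<not> ?thesis"
  define N where "N = {u \<in> HH. E v u}"
  define zf where "zf u = (SOME z. E u z \<and> z \<noteq> v \<and> z \<noteq> s \<and> \<not> E z s)" for u
  have zf: "E u (zf u) \<and> zf u \<noteq> v \<and> zf u \<noteq> s \<and> \<not> E (zf u) s" if "u \<in> N" for u
  proof -
    have "\<exists>z. E u z \<and> z \<noteq> v \<and> z \<noteq> s \<and> \<not> E z s" using na that unfolding N_def by blast
    thus ?thesis unfolding zf_def by (rule someI_ex)
  qed
  have sV: "s \<in> V" using s x_fact by auto
  have Nv: "E v u" "u \<in> HH" if "u \<in> N" for u using that unfolding N_def by auto
  have uw: "u \<noteq> w" if "u \<in> N" for u using that w(2) unfolding N_def by auto
  define D where "D = insert s (insert w (zf ` N))"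
  have DV: "D \<subseteq> V" unfolding D_def using sV w(1) zf inV by blast
  have f1: "\<not> E s w" "\<not> E w s" using sw irr sym by blast+
  have f2: "\<not> E (zf u) s" "\<not> E s (zf u)" if "u \<in> N" for u using zf[OF that] sym by blast+
  have f3: "\<not> E w (zf u)" if u: "u \<in> N" for u
  proof
    assume a: "E w (zf u)"
    have "E v u" "E u (zf u)" "E (zf u) w" "E w v" "v \<noteq> zf u" "u \<noteq> w"
      using Nv[OF u] zf[OF u] sym[OF a] sym[OF w(3)] uw[OF u] by auto
    thus False by (rule no4)
  qed
  have f3': "\<not> E (zf u) w" if "u \<in> N" for u using f3[OF that] sym by blast
  have f4: "\<not> E (zf u) (zf u')" if u: "u \<in> N" and u': "u' \<in> N" for u u'
  proof
    assume a: "E (zf u) (zf u')"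
    show False
    proof (cases "u = u'")
      case True thus False using a irr by simp
    next
      case False
      have t1: "u \<noteq> zf u'"
      proof
        assume "u = zf u'"
        hence "E u' u" using zf[OF u'] by simp
        thus False using no3[of v u u'] Nv[OF u] Nv[OF u'] sym by blast
      qed
      have t2: "zf u \<noteq> u'"
      proof
        assume "zf u = u'"
        hence "E u u'" using zf[OF u] by simp
        thus False using no3[of v u u'] Nv[OF u] Nv[OF u'] sym by blast
      qed
      have "E v u" "E u (zf u)" "E (zf u) (zf u')" "E (zf u') u'" "E u' v"
        using Nv[OF u] Nv[OF u'] zf[OF u] zf[OF u'] a sym by auto
      moreover have "v \<noteq> zf u" "v \<noteq> zf u'" "u \<noteq> zf u'" "u \<noteq> u'" "zf u \<noteq> u'"
        using zf[OF u] zf[OF u'] t1 t2 False by auto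
      ultimately show False by (rule no5)
    qed
  qed
  have indD: "independent V E D" unfolding independent_def
  proof (intro conjI ballI)
    show "D \<subseteq> V" by (rule DV)
    fix a b assume ab: "a \<in> D" "b \<in> D"
    show "\<not> E a b" using ab f1 f2 f3 f3' f4 irr unfolding D_def by auto
  qed
  obtain S where S: "maximal_independent V E S" "D \<subseteq> S" using indep_ext[OF indD] by blast
  have Si: "independent V E S" using max_indep[OF S(1)] .
  have sS: "s \<in> S" "w \<in> S" using S(2) unfolding D_def by auto
  have vS: "v \<notin> S" using indepD[OF Si _ sS(2)] w(3) by blast
  have nb: "\<forall>t\<in>S \<inter> HH. \<not> E v t"
  proof (intro ballI notI)
    fix t assume t: "t \<in> S \<inter> HH" and e: "E v t"
    hence tN: "t \<in> N" unfolding N_def by auto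
    hence "zf t \<in> S" using S(2) unfolding D_def by auto
    thus False using indepD[OF Si] t zf[OF tN] by blast
  qed
  have xyS: "x \<in> S \<or> y \<in> S" using sS s by blast
  show False by (rule K1[OF awc S(1) xyS v vS nb])
qed

lemma O1: assumes awc: "almost_well_covered V E" and v: "v \<in> HH" and s: "s = x \<or> s = y"
  shows "\<not> E v s"
proof
  assume e: "E v s"
  have sV: "s \<in> V" "s \<notin> HH" using s x_fact x_notH by auto
  obtain u where u: "u \<in> HH" "E v u" and P: "\<forall>z. E u z \<and> z \<noteq> v \<longrightarrow> z = s \<or> E z s"
    using G[OF awc v sV(1) sV(2) e s] by blast
  have uV: "u \<in> V - LL" using u HH_sub by auto
  obtain z where z: "E u z" "z \<noteq> v" using other_nb[OF uV] by blast
  have "z = s \<or> E z s" using P z by blast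
  thus False
  proof
    assume "z = s"
    thus False using no3[of v u s] sym[OF e] u z by blast
  next
    assume ez: "E z s"
    have "s \<noteq> u" using u sV by auto
    thus False using no4[of s v u z] sym[OF e] u z ez by blast
  qed
qed

lemma MS: assumes awc: "almost_well_covered V E" and exy: "E x y" and v: "v \<in> HH"
  and w: "w \<in> V" "w \<notin> HH" "E v w"
  shows "\<exists>u z s s'. ((s = x \<and> s' = y) \<or> (s = y \<and> s' = x)) \<and> u \<in> HH \<and> z \<in> V \<and> z \<notin> HH \<and>
     (\<forall>t. E v t \<longleftrightarrow> t = u \<or> t = w) \<and> (\<forall>t. E u t \<longleftrightarrow> t = v \<or> t = z) \<and> E w s' \<and> E z s"
proof -
  have wxy: "w \<noteq> x" "w \<noteq> y" using O1[OF awc v] w(3) by auto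
  obtain s s' where ss: "(s = x \<and> s' = y) \<or> (s = y \<and> s' = x)" and nsw: "\<not> E s w"
  proof (cases "E x w")
    case True
    hence "\<not> E y w" using no3[of x y w] exy sym by blast
    thus ?thesis using that by blast
  next
    case False thus ?thesis using that by blast
  qed
  have s1: "s = x \<or> s = y" "s' = x \<or> s' = y" using ss by auto
  have ess: "E s s'" using ss exy sym by auto
  obtain u where u: "u \<in> HH" "E v u" and Pu: "\<forall>z. E u z \<and> z \<noteq> v \<longrightarrow> z = s \<or> E z s"
    using G[OF awc v w(1) w(2) w(3) s1(1)] nsw by blast
  have uV: "u \<in> V - LL" using u HH_sub by auto
  obtain z0 where z0: "E u z0" "z0 \<noteq> v" using other_nb[OF uV] by blast
  have z0s: "z0 \<noteq> s" using O1[OF awc u(1) s1(1)] z0(1) by auto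
  have ez0: "E z0 s" using Pu z0 z0s by blast
  have us: "u \<noteq> s" using u(1) x_notH s1(1) by auto
  have Nu: "\<forall>t. E u t \<longleftrightarrow> t = v \<or> t = z0"
  proof (intro allI iffI)
    fix t assume et: "E u t"
    show "t = v \<or> t = z0"
    proof (rule ccontr)
      assume nt: "\<not> (t = v \<or> t = z0)"
      hence "t = s \<or> E t s" using Pu et by blast
      moreover have "t \<noteq> s" using O1[OF awc u(1) s1(1)] et by auto
      ultimately have ets: "E t s" by auto
      have "E u z0" "E z0 s" "E s t" "E t u" "u \<noteq> s" "z0 \<noteq> t"
        using z0(1) ez0 sym[OF ets] sym[OF et] us nt by auto
      thus False by (rule no4)
    qed
  next
    fix t assume "t = v \<or> t = z0" thus "E u t" using u(2) sym z0(1) by auto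
  qed
  have z0H: "z0 \<notin> HH" using O1[OF awc _ s1(1)] ez0 by auto
  have z0V: "z0 \<in> V" using inV z0(1) by auto
  have ns'z: "\<not> E s' z0" using no3[of s s' z0] ess ez0 by blast
  obtain u' where u': "u' \<in> HH" "E u u'" and Pu': "\<forall>t. E u' t \<and> t \<noteq> u \<longrightarrow> t = s' \<or> E t s'"
    using G[OF awc u(1) z0V z0H z0(1) s1(2)] ns'z by blast
  have "u' = v" using Nu u' z0H by auto
  hence Pv: "\<forall>t. E v t \<and> t \<noteq> u \<longrightarrow> t = s' \<or> E t s'" using Pu' by simp
  have wu: "w \<noteq> u" using w(2) u(1) by auto
  have ws': "w \<noteq> s'" using wxy s1(2) by auto
  have ews: "E w s'" using Pv w(3) wu ws' by blast
  have vs': "v \<noteq> s'" using v x_notH s1(2) by auto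
  have Nv: "\<forall>t. E v t \<longleftrightarrow> t = u \<or> t = w"
  proof (intro allI iffI)
    fix t assume et: "E v t"
    show "t = u \<or> t = w"
    proof (rule ccontr)
      assume nt: "\<not> (t = u \<or> t = w)"
      hence "t = s' \<or> E t s'" using Pv et by blast
      moreover have "t \<noteq> s'" using O1[OF awc v s1(2)] et by auto
      ultimately have ets: "E t s'" by auto
      have "E v w" "E w s'" "E s' t" "E t v" "v \<noteq> s'" "w \<noteq> t"
        using w(3) ews sym[OF ets] sym[OF et] vs' nt by auto
      thus False by (rule no4)
    qed
  next
    fix t assume "t = u \<or> t = w" thus "E v t" using u(2) w(3) by auto
  qed
  show ?thesis using ss u(1) z0V z0H Nv Nu ews ez0 by blast
qed

lemma path: assumes "E\<^sup>*\<^sup>* h t" "h \<in> HH - A" "t \<notin> HH" "\<forall>a\<in>A. \<forall>b\<in>HH. E b a \<longrightarrow> b \<in> A"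
  shows "\<exists>q\<in>HH - A. \<exists>p. p \<notin> HH \<and> E q p"
  using assms
proof (induction rule: converse_rtranclp_induct)
  case base thus ?case by auto
next
  case (step h b)
  show ?case
  proof (cases "b \<in> HH")
    case False thus ?thesis using step by blast
  next
    case True
    have "b \<notin> A"
    proof
      assume "b \<in> A"
      hence "h \<in> A" using step.prems(3) step.hyps(1) step.prems(1) by blast
      thus False using step.prems(1) by blast
    qed
    thus ?thesis using step.IH True step.prems by blast
  qed
qed


lemma indep_xy: assumes exy: "E x y" and D: "\<forall>d\<in>D. d \<in> V \<and> d \<noteq> x \<and> d \<noteq> y \<and> (E d x \<or> E d y)"
  shows "independent V E D"
  unfolding independent_def
proof (intro conjI ballI)
  show "D \<subseteq> V" using D by auto
  fix a b assume a: "a \<in> D" and b: "b \<in> D"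
  show "\<not> E a b"
  proof
    assume ab: "E a b"
    have A: "a \<noteq> x" "a \<noteq> y" "E a x \<or> E a y" using D a by auto
    have B: "b \<noteq> x" "b \<noteq> y" "E b x \<or> E b y" using D b by auto
    have eyx: "E y x" using sym exy by blast
    show False
    proof (cases "E a x")
      case ax: True
      show False
      proof (cases "E b x")
        case True thus False using no3[of a b x] ab sym ax by blast
      next
        case False
        hence "E b y" using B by auto
        thus False using no4[of a b y x] ab eyx sym[OF ax] A B by blast
      qed
    next
      case nax: False
      hence ay: "E a y" using A by auto
      show False
      proof (cases "E b y")
        case True thus False using no3[of a b y] ab sym ay by blast
      next
        case False
        hence "E b x" using B by auto
        thus False using no4[of a b x y] ab exy sym[OF ay] A B by blast
      qed
    qed
  qed
qed

lemma fwd: assumes awc: "almost_well_covered V E"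
  shows "E x y \<and> (HH = {} \<or> (\<exists>a b. a \<noteq> b \<and> HH = {a, b} \<and> E a b \<and>
        (\<forall>v \<in> HH. \<not> E x v \<and> \<not> E y v) \<and>
        degree V E a = 2 \<and> degree V E b = 2 \<and>
        (\<exists>cs. is_induced_cycle V E cs \<and> length cs = 6 \<and> {a, b, x, y} \<subseteq> set cs)))"
proof -
  have exy: "E x y" by (rule K3[OF awc])
  have eyx: "E y x" using sym exy by blast
  have O1': "\<forall>v\<in>HH. \<not> E x v \<and> \<not> E y v" using O1[OF awc] sym by blast
  show ?thesis
  proof (cases "HH = {}")
    case True thus ?thesis using exy by blast
  next
    case False
    then obtain h where h: "h \<in> HH" by blast
    have "E\<^sup>*\<^sup>* h x" using reach h HH_sub x_fact by blast
    then obtain q where q: "q \<in> HH" and "\<exists>p. p \<notin> HH \<and> E q p" using path[of h x "{}"] h x_notH by blast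
    then obtain p where p: "p \<notin> HH" "E q p" by blast
    have pV: "p \<in> V" using inV p(2) by blast
    obtain u z s s' where ss: "(s = x \<and> s' = y) \<or> (s = y \<and> s' = x)" and u: "u \<in> HH" and z: "z \<in> V" "z \<notin> HH"
      and Nq: "\<forall>t. E q t \<longleftrightarrow> t = u \<or> t = p" and Nu: "\<forall>t. E u t \<longleftrightarrow> t = q \<or> t = z"
      and eps: "E p s'" and ezs: "E z s"
      using MS[OF awc exy q pV p] by blast
    have s1: "s = x \<or> s = y" "s' = x \<or> s' = y" using ss by auto
    have ess: "E s s'" using ss exy eyx by auto
    have sns: "s \<noteq> s'" using ss xy by auto
    have sH: "s \<notin> HH" "s' \<notin> HH" using s1 x_notH by auto
    have sV: "s \<in> V" "s' \<in> V" using s1 x_fact by auto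
    have equ: "E q u" using Nq by simp
    have euz: "E u z" using Nu by simp
    have pz: "p \<noteq> z"
    proof
      assume "p = z"
      hence "E z s'" using eps by simp
      thus False using no3[of z s s'] ezs ess sym by blast
    qed
    have ps: "p \<noteq> s" using O1[OF awc q s1(1)] p(2) by auto
    have ps': "p \<noteq> s'" using irr eps by auto
    have zs: "z \<noteq> s" using irr ezs by auto
    have zs': "z \<noteq> s'" using O1[OF awc u s1(2)] euz by auto
    have qu: "q \<noteq> u" using equ irr by auto
    have HHeq: "HH = {q, u}"
    proof (rule ccontr)
      assume "HH \<noteq> {q, u}"
      then obtain h2 where h2: "h2 \<in> HH - {q, u}" using q u by blast
      have cl: "\<forall>a\<in>{q, u}. \<forall>b\<in>HH. E b a \<longrightarrow> b \<in> {q, u}"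
      proof (intro ballI impI)
        fix a b assume a: "a \<in> {q, u}" and b: "b \<in> HH" and e: "E b a"
        show "b \<in> {q, u}"
        proof (cases "a = q")
          case True
          hence "b = u \<or> b = p" using Nq sym[OF e] by blast
          thus ?thesis using p(1) b by auto
        next
          case False
          hence "a = u" using a by auto
          hence "b = q \<or> b = z" using Nu sym[OF e] by blast
          thus ?thesis using z(2) b by auto
        qed
      qed
      have "E\<^sup>*\<^sup>* h2 x" using reach h2 HH_sub x_fact by blast
      then obtain q2 where q2: "q2 \<in> HH - {q, u}" and "\<exists>p. p \<notin> HH \<and> E q2 p"
        using path[of h2 x "{q, u}"] h2 x_notH cl by blast
      then obtain p2 where p2: "p2 \<notin> HH" "E q2 p2" by blast
      have p2V: "p2 \<in> V" using inV p2(2) by blast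
      have q2H: "q2 \<in> HH" using q2 by auto
      obtain u2 z2 t t' where tt: "(t = x \<and> t' = y) \<or> (t = y \<and> t' = x)" and u2: "u2 \<in> HH"
        and z2: "z2 \<in> V" "z2 \<notin> HH"
        and Nq2: "\<forall>r. E q2 r \<longleftrightarrow> r = u2 \<or> r = p2" and Nu2: "\<forall>r. E u2 r \<longleftrightarrow> r = q2 \<or> r = z2"
        and ep2: "E p2 t'" and ez2: "E z2 t"
        using MS[OF awc exy q2H p2V p2] by blast
      have t1: "t = x \<or> t = y" "t' = x \<or> t' = y" using tt by auto
      have p2t: "p2 \<noteq> t" using O1[OF awc q2H t1(1)] p2(2) by auto
      have p2t': "p2 \<noteq> t'" using irr ep2 by auto
      have z2t: "z2 \<noteq> t" using irr ez2 by auto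
      have z2t': "z2 \<noteq> t'" using O1[OF awc u2 t1(2)] Nu2 by auto
      define D where "D = {p, z, p2, z2}"
      have Dp: "\<forall>d\<in>D. d \<in> V \<and> d \<noteq> x \<and> d \<noteq> y \<and> (E d x \<or> E d y)"
        unfolding D_def using pV z p2V z2 ps ps' zs zs' p2t p2t' z2t z2t' ss tt eps ezs ep2 ez2
        by auto
      have indD: "independent V E D" by (rule indep_xy[OF exy Dp])
      obtain S where S: "maximal_independent V E S" "D \<subseteq> S" using indep_ext[OF indD] by blast
      have Si: "independent V E S" using max_indep[OF S(1)] .
      have inS: "p \<in> S" "z \<in> S" "p2 \<in> S" "z2 \<in> S" using S(2) unfolding D_def by auto
      have "s \<notin> S" using indepD[OF Si inS(2)] ezs by blast
      moreover have "s' \<notin> S" using indepD[OF Si inS(1)] eps by blast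
      ultimately have xS: "x \<notin> S" "y \<notin> S" using ss by auto
      have qS: "q \<notin> S" using indepD[OF Si _ inS(1)] p(2) by blast
      have q2S: "q2 \<notin> S" using indepD[OF Si _ inS(3)] p2(2) by blast
      have uS: "u \<notin> S" using indepD[OF Si _ inS(2)] euz by blast
      have u2S: "u2 \<notin> S" using indepD[OF Si _ inS(4)] Nu2 by blast
      have qq2: "q \<noteq> q2" using q2 by auto
      have nqq2: "\<not> E q q2" using Nq q2 p(1) by auto
      have nb: "\<forall>r\<in>S \<inter> HH. \<not> E q r \<and> \<not> E q2 r"
      proof
        fix r assume r: "r \<in> S \<inter> HH"
        have "\<not> E q r" using Nq r uS p(1) by auto
        moreover have "\<not> E q2 r" using Nq2 r u2S p2(1) by auto
        ultimately show "\<not> E q r \<and> \<not> E q2 r" by simp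
      qed
      show False by (rule K2[OF awc S(1) q q2H qq2 nqq2 qS q2S nb])
    qed
    have Nqset: "{r \<in> V. E q r} = {u, p}" using Nq u HH_sub pV by auto
    have up: "u \<noteq> p" using u p by auto
    have dq: "degree V E q = 2" unfolding degree_def Nqset using up by simp
    have Nuset: "{r \<in> V. E u r} = {q, z}" using Nu q HH_sub z by auto
    have qz: "q \<noteq> z" using q z by auto
    have du: "degree V E u = 2" unfolding degree_def Nuset using qz by simp
    have nqz: "\<not> E q z" using Nq pz z u by auto
    have nqs: "\<not> E q s" "\<not> E q s'" using O1[OF awc q] s1 by auto
    have nus: "\<not> E u s" "\<not> E u s'" using O1[OF awc u] s1 by auto
    have nup: "\<not> E u p" using Nu p q pz by auto
    have nzs': "\<not> E z s'" using no3[of z s s'] ezs ess sym by blast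
    have nzp: "\<not> E z p"
    proof
      assume "E z p"
      hence "E q u" "E u z" "E z p" "E p q" "q \<noteq> z" "u \<noteq> p" using equ euz sym p(2) qz up by auto
      thus False by (rule no4)
    qed
    have nsp: "\<not> E s p" using no3[of s s' p] ess eps sym by blast
    have cyc: "is_induced_cycle V E [q, u, z, s, s', p]"
    proof (rule cyc6)
      show "E q u" "E u z" "E z s" "E s s'" "E s' p" "E p q" using equ euz ezs ess eps p(2) sym by auto
      show "distinct [q, u, z, s, s', p]" using qu qz q sH p u z pz ps ps' zs zs' sns up by auto
      show "{q, u, z, s, s', p} \<subseteq> V" using q u HH_sub z sV pV by auto
      show "\<not> E q z" "\<not> E q s" "\<not> E q s'" "\<not> E u s" "\<not> E u s'" "\<not> E u p" "\<not> E z s'" "\<not> E z p" "\<not> E s p"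
        using nqz nqs nus nup nzs' nzp nsp by auto
      show "\<not> E z q" "\<not> E s q" "\<not> E s' q" "\<not> E s u" "\<not> E s' u" "\<not> E p u" "\<not> E s' z" "\<not> E p z" "\<not> E p s"
        using nqz nqs nus nup nzs' nzp nsp sym by blast+
      show "\<And>v. \<not> E v v" using irr by auto
    qed
    have "{q, u, x, y} \<subseteq> set [q, u, z, s, s', p]" using ss by auto
    hence "q \<noteq> u \<and> HH = {q, u} \<and> E q u \<and> (\<forall>v \<in> HH. \<not> E x v \<and> \<not> E y v) \<and>
        degree V E q = 2 \<and> degree V E u = 2 \<and>
        (\<exists>cs. is_induced_cycle V E cs \<and> length cs = 6 \<and> {q, u, x, y} \<subseteq> set cs)"
      using qu HHeq equ O1' dq du cyc by (intro conjI exI[of _ "[q, u, z, s, s', p]"]) auto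
    thus ?thesis using exy by blast
  qed
qed


lemma CN: assumes c: "is_cycle V E cs" and v: "v \<in> set cs"
  shows "\<exists>n1 n2. n1 \<noteq> n2 \<and> n1 \<in> set cs \<and> n2 \<in> set cs \<and> E v n1 \<and> E v n2"
proof -
  define n where "n = length cs"
  have n3: "n \<ge> 3" and dist: "distinct cs" and ed: "\<forall>i<n. E (cs ! i) (cs ! ((i + 1) mod n))"
    using c unfolding is_cycle_def n_def by auto
  obtain i where i: "i < n" "cs ! i = v" using v unfolding n_def by (auto simp: in_set_conv_nth)
  define j1 where "j1 = (if i + 1 = n then 0 else i + 1)"
  define j2 where "j2 = (if i = 0 then n - 1 else i - 1)"
  have j1: "j1 < n" "(i + 1) mod n = j1" using i n3 unfolding j1_def by auto
  have j2: "j2 < n" "(j2 + 1) mod n = i" using i n3 unfolding j2_def by auto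
  have j12: "j1 \<noteq> j2" using i n3 unfolding j1_def j2_def by auto
  have e1: "E v (cs ! j1)" using ed i j1 by metis
  have e2: "E (cs ! j2) v" using ed j2 i by metis
  have ne: "cs ! j1 \<noteq> cs ! j2" using nth_eq_iff_index_eq[OF dist] j1 j2 j12 unfolding n_def by auto
  show ?thesis using e1 sym[OF e2] ne j1(1) j2(1) unfolding n_def by (intro exI[of _ "cs ! j1"] exI[of _ "cs ! j2"]) auto
qed

lemma nb2: assumes d: "degree V E a = 2" and ab: "E a b" and ac: "E a c" and bc: "b \<noteq> c"
  shows "\<forall>t. E a t \<longrightarrow> t = b \<or> t = c"
proof (intro allI impI)
  fix t assume at: "E a t"
  show "t = b \<or> t = c"
  proof (rule ccontr)
    assume nt: "\<not> (t = b \<or> t = c)"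
    have sub: "{b, c, t} \<subseteq> {u \<in> V. E a u}" using ab ac at inV by auto
    have fin: "finite {u \<in> V. E a u}" using finV by auto
    have "card {b, c, t} = 3" using bc nt by auto
    moreover have "card {b, c, t} \<le> card {u \<in> V. E a u}" using card_mono[OF fin sub] .
    ultimately show False using d unfolding degree_def by simp
  qed
qed

lemma other_in_cycle: assumes c: "is_cycle V E cs" and v: "v \<in> set cs"
  obtains r where "r \<in> set cs" "E v r" "r \<noteq> b"
proof -
  obtain n1 n2 where n: "n1 \<noteq> n2" "n1 \<in> set cs" "n2 \<in> set cs" "E v n1" "E v n2" using CN[OF c v] by blast
  show ?thesis
  proof (cases "n1 = b")
    case True thus ?thesis using that n by metis
  next
    case False thus ?thesis using that n by metis
  qed
qed

lemma cyc_struct: assumes aH: "a \<in> HH" and bH: "b \<in> HH" and ab: "a \<noteq> b" "E a b"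
  and nx: "\<not> E x a" "\<not> E y a" "\<not> E x b" "\<not> E y b"
  and da: "degree V E a = 2" and db: "degree V E b = 2"
  and c: "is_cycle V E cs" and len: "length cs = 6" and sub: "{a, b, x, y} \<subseteq> set cs"
  shows "\<exists>ta tb. (\<forall>t. E a t \<longrightarrow> t = b \<or> t = ta) \<and> (\<forall>t. E b t \<longrightarrow> t = a \<or> t = tb) \<and>
     (E x ta \<or> E x tb) \<and> (E y ta \<or> E y tb)"
proof -
  obtain ta where ta: "ta \<in> set cs" "E a ta" "ta \<noteq> b" using other_in_cycle[OF c, of a b] sub by auto
  obtain tb where tb: "tb \<in> set cs" "E b tb" "tb \<noteq> a" using other_in_cycle[OF c, of b a] sub by auto
  have Na: "\<forall>t. E a t \<longrightarrow> t = b \<or> t = ta" using nb2[OF da ab(2) ta(2)] ta(3) by auto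
  have Nb: "\<forall>t. E b t \<longrightarrow> t = a \<or> t = tb" using nb2[OF db sym[OF ab(2)] tb(2)] tb(3) by auto
  have tab: "ta \<noteq> tb"
  proof
    assume "ta = tb"
    thus False using no3[of a b ta] ab(2) tb(2) sym[OF ta(2)] by simp
  qed
  have xa: "x \<noteq> a" "x \<noteq> b" "y \<noteq> a" "y \<noteq> b" using aH bH x_notH by auto
  have tax: "ta \<noteq> x" "ta \<noteq> y" "ta \<noteq> a" using nx ta(2) sym irr by blast+
  have tbx: "tb \<noteq> x" "tb \<noteq> y" "tb \<noteq> b" using nx tb(2) sym irr by blast+
  have dist: "distinct cs" using c unfolding is_cycle_def by auto
  have c6: "card (set cs) = 6" using distinct_card[OF dist] len by simp
  have sub2: "{a, b, x, y, ta, tb} \<subseteq> set cs" using sub ta tb by auto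
  have c6': "card {a, b, x, y, ta, tb} = 6" using ab(1) xa tax tbx tab xy ta(3) tb(3) by auto
  have seq: "{a, b, x, y, ta, tb} = set cs"
    by (rule card_seteq) (use sub2 c6 c6' in auto)
  have xt: "E x ta \<or> E x tb"
  proof -
    obtain r where r: "r \<in> set cs" "E x r" "r \<noteq> y" using other_in_cycle[OF c, of x y] sub by auto
    have "r \<noteq> x" "r \<noteq> a" "r \<noteq> b" using r irr nx by auto
    hence "r = ta \<or> r = tb" using r seq by auto
    thus ?thesis using r by auto
  qed
  have yt: "E y ta \<or> E y tb"
  proof -
    obtain r where r: "r \<in> set cs" "E y r" "r \<noteq> x" using other_in_cycle[OF c, of y x] sub by auto
    have "r \<noteq> y" "r \<noteq> a" "r \<noteq> b" using r irr nx by auto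
    hence "r = ta \<or> r = tb" using r seq by auto
    thus ?thesis using r by auto
  qed
  show ?thesis using Na Nb xt yt by blast
qed

lemma awc_intro: assumes lb: "\<And>S. maximal_independent V E S \<Longrightarrow> int (alpha V E) - 1 \<le> int (card S)"
  and ex: "maximal_independent V E S0" "int (card S0) = int (alpha V E) - 1"
  shows "almost_well_covered V E"
proof -
  obtain S where S: "maximal_independent V E S" "card S = indep_dom V E" by (rule i_ex)
  have "int (alpha V E) - 1 \<le> int (indep_dom V E)" using lb[OF S(1)] S(2) by simp
  moreover have "int (indep_dom V E) \<le> int (card S0)" using i_le[OF ex(1)] by simp
  ultimately show ?thesis unfolding almost_well_covered_def using ex(2) by linarith
qed

lemma card_formula_xy: assumes S: "maximal_independent V E S" and exy: "E x y"
  shows "int (card LL) + int (card (S \<inter> HH)) - 1 \<le> int (card S)"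
proof -
  have "\<not> (x \<in> S \<and> y \<in> S)" using indepD[OF max_indep[OF S]] exy by blast
  thus ?thesis using max_card[OF S] by (cases "x \<in> S"; cases "y \<in> S") auto
qed

lemma bwd: assumes exy: "E x y"
  and cond: "HH = {} \<or> (\<exists>a b. a \<noteq> b \<and> HH = {a, b} \<and> E a b \<and>
        (\<forall>v \<in> HH. \<not> E x v \<and> \<not> E y v) \<and>
        degree V E a = 2 \<and> degree V E b = 2 \<and>
        (\<exists>cs. is_induced_cycle V E cs \<and> length cs = 6 \<and> {a, b, x, y} \<subseteq> set cs))"
  shows "almost_well_covered V E"
proof (cases "HH = {}")
  case True
  obtain M where M: "M \<subseteq> HH" "independent V E M" "card M = aH" by (rule aH_ex)
  have aH0: "aH = 0" using M True by auto
  have al: "int (alpha V E) = int (card LL)" using alpha_eq aH0 by simp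
  have ix: "independent V E {x}" using x_fact irr unfolding independent_def by auto
  obtain S0 where S0: "maximal_independent V E S0" "{x} \<subseteq> S0" using indep_ext[OF ix] by blast
  have yS0: "y \<notin> S0" using indepD[OF max_indep[OF S0(1)]] S0(2) exy by blast
  have c0: "int (card S0) = int (alpha V E) - 1" using max_card[OF S0(1)] S0(2) yS0 al True by simp
  show ?thesis
  proof (rule awc_intro[OF _ S0(1) c0])
    fix S assume S: "maximal_independent V E S"
    show "int (alpha V E) - 1 \<le> int (card S)" using card_formula_xy[OF S exy] al by linarith
  qed
next
  case False
  then obtain a b cs where ab: "a \<noteq> b" and HHab: "HH = {a, b}" and eab: "E a b"
    and nx: "\<forall>v \<in> HH. \<not> E x v \<and> \<not> E y v" and da: "degree V E a = 2" and db: "degree V E b = 2"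
    and ic: "is_induced_cycle V E cs" and len: "length cs = 6" and sub: "{a, b, x, y} \<subseteq> set cs"
    using cond by blast
  have aH: "a \<in> HH" and bH: "b \<in> HH" using HHab by auto
  have nx': "\<not> E x a" "\<not> E y a" "\<not> E x b" "\<not> E y b" using nx aH bH by auto
  have c: "is_cycle V E cs" using ic unfolding is_induced_cycle_def by auto
  obtain ta tb where Na: "\<forall>t. E a t \<longrightarrow> t = b \<or> t = ta" and Nb: "\<forall>t. E b t \<longrightarrow> t = a \<or> t = tb"
    and xt: "E x ta \<or> E x tb" and yt: "E y ta \<or> E y tb"
    using cyc_struct[OF aH bH ab eab nx' da db c len sub] by blast
  have aV: "a \<in> V" "b \<in> V" using aH bH HH_sub by auto
  obtain M where M: "M \<subseteq> HH" "independent V E M" "card M = aH" by (rule aH_ex)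
  have "card M \<le> 1"
  proof -
    have "\<not> (a \<in> M \<and> b \<in> M)" using indepD[OF M(2)] eab by blast
    hence "M \<subseteq> {a} \<or> M \<subseteq> {b}" using M(1) HHab by auto
    thus ?thesis by (metis card.empty card.insert card_mono empty_iff finite.emptyI finite.insertI One_nat_def)
  qed
  moreover have "1 \<le> aH"
  proof -
    have "independent V E {a}" using aV irr unfolding independent_def by auto
    from aH_ge[OF _ this] aH show ?thesis by simp
  qed
  ultimately have aH1: "aH = 1" using M by simp
  have al: "int (alpha V E) = int (card LL) + 1" using alpha_eq aH1 by simp
  have iax: "independent V E {a, x}" using aV x_fact irr nx' sym unfolding independent_def by blast
  obtain S0 where S0: "maximal_independent V E S0" "{a, x} \<subseteq> S0" using indep_ext[OF iax] by blast
  have S0i: "independent V E S0" using max_indep[OF S0(1)] .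
  have yS0: "y \<notin> S0" using indepD[OF S0i] S0(2) exy by blast
  have bS0: "b \<notin> S0" using indepD[OF S0i] S0(2) eab by blast
  have S0H: "S0 \<inter> HH = {a}" using HHab S0(2) bS0 by auto
  have c0: "int (card S0) = int (alpha V E) - 1" using max_card[OF S0(1)] S0(2) yS0 al S0H by simp
  show ?thesis
  proof (rule awc_intro[OF _ S0(1) c0])
    fix S assume S: "maximal_independent V E S"
    have Si: "independent V E S" using max_indep[OF S] .
    show "int (alpha V E) - 1 \<le> int (card S)"
    proof (cases "S \<inter> HH = {}")
      case False
      hence "card (S \<inter> HH) \<ge> 1" using finHH by (simp add: Suc_le_eq card_gt_0_iff)
      thus ?thesis using card_formula_xy[OF S exy] al by linarith
    next
      case True
      hence abS: "a \<notin> S" "b \<notin> S" using aH bH by auto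
      obtain s1 where s1: "s1 \<in> S" "E a s1" using max_dom[OF S aV(1) abS(1)] by blast
      have "s1 = ta" using Na s1 abS by blast
      hence taS: "ta \<in> S" using s1 by simp
      obtain s2 where s2: "s2 \<in> S" "E b s2" using max_dom[OF S aV(2) abS(2)] by blast
      have "s2 = tb" using Nb s2 abS by blast
      hence tbS: "tb \<in> S" using s2 by simp
      have xS: "x \<notin> S" using xt indepD[OF Si _ taS] indepD[OF Si _ tbS] by blast
      have yS: "y \<notin> S" using yt indepD[OF Si _ taS] indepD[OF Si _ tbS] by blast
      show ?thesis using max_card[OF S] True xS yS al by simp
    qed
  qed
qed

end

theorem theorem14:
  fixes V :: "'a set" and E :: "'a \<Rightarrow> 'a \<Rightarrow> bool" and x y :: 'a
  assumes "graph V E"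
    and "connected_graph V E"
    and "girth V E \<ge> 6"
    and "x \<noteq> y"
    and "type_vertices V E 2 = {x, y}"
    and "\<forall>v k. has_type V E v k \<longrightarrow> k \<le> 2"
  shows "almost_well_covered V E \<longleftrightarrow>
    E x y \<and>
    (type_vertices V E 0 = {} \<or>
     (\<exists>a b. a \<noteq> b \<and> type_vertices V E 0 = {a, b} \<and> E a b \<and>
        (\<forall>v \<in> type_vertices V E 0. \<not> E x v \<and> \<not> E y v) \<and>
        degree V E a = 2 \<and> degree V E b = 2 \<and>
        (\<exists>cs. is_induced_cycle V E cs \<and> length cs = 6 \<and> {a, b, x, y} \<subseteq> set cs)))"
proof -
  interpret G6 V E x y using assms by unfold_locales
  show ?thesis using fwd bwd unfolding HH_def by blast
qed

end
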